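(* If a Collatz trajectory $(n,C(n),C^2(n),\dots)$, $n\in\mathbb{N}^+$, does not contain $1$, then for every $r\in\{2,3,4,6\}$ it contains some element congruent to $r$ modulo $8$.
   Context: $C:\mathbb{N}^+\to\mathbb{N}^+$ is the Collatz function $C(n)=n/2$ for $n$ even and $C(n)=3n+1$ for $n$ odd. *)

theory Defs
  imports Main
begin

definition collatz :: "nat \<Rightarrow> nat" where
  "collatz n = (if even n then n div 2 else 3 * n + 1)"

end

theory Submission
  imports Defs
begin

lemma H1: "(x::nat) mod 4 = 0 \<Longrightarrow> x mod 8 \<noteq> 4 \<Longrightarrow> x mod 8 = 0" by presburger
lemma H2: "(x::nat) mod 8 = 0 \<Longrightarrow> even x" by presburger
lemma H3: "(x::nat) mod 8 = 0 \<Longrightarrow> (x div 2) mod 4 = 0" by presburger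
lemma H4: "odd (x::nat) \<Longrightarrow> x mod 4 \<noteq> 3 \<Longrightarrow> x mod 4 = 1" by presburger
lemma H5: "(x::nat) mod 4 = 1 \<Longrightarrow> x \<noteq> 1 \<Longrightarrow> x \<ge> 5" by presburger
lemma H6: "(x::nat) mod 4 = 1 \<Longrightarrow> even ((3*x+1) div 2)" by presburger
lemma H7: "4 dvd ((x::nat)+1) \<Longrightarrow> \<not> 8 dvd (x+1) \<Longrightarrow> x mod 8 = 3" by presburger
lemma H8: "4 dvd ((x::nat)+1) \<Longrightarrow> x mod 8 \<noteq> 3 \<Longrightarrow> \<exists>a. x+1 = 8*a" by presburger
lemma H9: "(x::nat)+1 = 8*a \<Longrightarrow> odd x" by presburger
lemma H10: "(y::nat)+1 = 12*a \<Longrightarrow> 4 dvd (y+1)" by presburger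
lemma H11: "odd (x::nat) \<Longrightarrow> x mod 4 = 3 \<Longrightarrow> 4 dvd (x+1)" by presburger
lemma H12: "(x::nat) mod 8 = 3 \<Longrightarrow> odd x" by presburger
lemma H13: "(x::nat) mod 8 = 3 \<Longrightarrow> ((3*x+1) div 2) mod 4 = 1" by presburger
lemma H14: "(y::nat) mod 4 = 1 \<Longrightarrow> (3*y+1) mod 4 = 0" by presburger
lemma H14b: "(y::nat) mod 4 = 1 \<Longrightarrow> odd y" by presburger
lemma H15: "(x::nat) mod 8 = 3 \<Longrightarrow> (2*x) mod 8 = 6" by presburger
lemma H16: "(x::nat) mod 8 = 3 \<Longrightarrow> (3*x+1) mod 8 = 2" by presburger

lemma L1:
  assumes st: "\<And>k. f (Suc k) = collatz (f k)" and pos: "\<And>k. f k > (0::nat)"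
  shows "even (f K) \<Longrightarrow> \<exists>j>K. odd (f j) \<and> f j \<le> f K div 2"
proof (induction "f K" arbitrary: K rule: less_induct)
  case less
  have e: "f (Suc K) = f K div 2" using st[of K] less.prems by (simp add: collatz_def)
  show ?case
  proof (cases "odd (f (Suc K))")
    case True then show ?thesis using e by (intro exI[of _ "Suc K"]) auto
  next
    case False
    have "f (Suc K) < f K" using e pos[of K] by simp
    moreover have "even (f (Suc K))" using False by simp
    ultimately obtain j where "j > Suc K" "odd (f j)" "f j \<le> f (Suc K) div 2" using less.hyps by blast
    then show ?thesis using e by (intro exI[of _ j]) auto
  qed
qed

lemma L2:
  assumes st: "\<And>k. f (Suc k) = collatz (f k)" and pos: "\<And>k. f k > (0::nat)"
  shows "f K mod 4 = 0 \<Longrightarrow> \<exists>j\<ge>K. f j mod 8 = 4"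
proof (induction "f K" arbitrary: K rule: less_induct)
  case less
  show ?case
  proof (cases "f K mod 8 = 4")
    case True then show ?thesis by (intro exI[of _ K] conjI) simp_all
  next
    case False
    then have m8: "f K mod 8 = 0" by (rule H1[OF less.prems])
    have ev: "even (f K)" using m8 by (rule H2)
    have e: "f (Suc K) = f K div 2" using st[of K] ev by (simp add: collatz_def)
    have lt: "f (Suc K) < f K" unfolding e using pos[of K] by simp
    have m4: "f (Suc K) mod 4 = 0" unfolding e by (rule H3[OF m8])
    obtain j where j: "j \<ge> Suc K" "f j mod 8 = 4" using less.hyps[OF lt m4] by blast
    show ?thesis by (rule exI[of _ j]) (use j in simp)
  qed
qed

lemma L3:
  assumes st: "\<And>k. f (Suc k) = collatz (f k)" and pos: "\<And>k. f k > (0::nat)"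
    and ne1: "\<And>k. f k \<noteq> 1"
  shows "odd (f K) \<Longrightarrow> \<exists>j\<ge>K. odd (f j) \<and> f j mod 4 = 3"
proof (induction "f K" arbitrary: K rule: less_induct)
  case less
  show ?case
  proof (cases "f K mod 4 = 3")
    case True show ?thesis by (rule exI[of _ K]) (use less.prems True in simp)
  next
    case False
    define x where "x = f K"
    have od: "odd x" using less.prems unfolding x_def .
    have x1: "x mod 4 = 1" unfolding x_def by (rule H4[OF less.prems False])
    have xg: "x \<ge> 5" using H5[OF x1] ne1[of K] unfolding x_def by simp
    have e1: "f (Suc K) = 3*x+1" using st[of K] less.prems unfolding x_def by (simp add: collatz_def)
    have e2: "f (Suc (Suc K)) = (3*x+1) div 2" using st[of "Suc K"] e1 od by (simp add: collatz_def)
    have ev: "even (f (Suc (Suc K)))" using e2 x1 H6 by simp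
    obtain j where j: "j > Suc (Suc K)" "odd (f j)" "f j \<le> f (Suc (Suc K)) div 2"
      using L1[of f, OF st pos ev] by blast
    have "f j < f K" using j(3) e2 xg unfolding x_def by linarith
    from less.hyps[OF this j(2)] obtain i where i: "i \<ge> j" "odd (f i) \<and> f i mod 4 = 3" by blast
    show ?thesis by (rule exI[of _ i]) (use i j(1) in simp)
  qed
qed

lemma L4:
  assumes st: "\<And>k. f (Suc k) = collatz (f k)"
  shows "4 dvd (f K + 1) \<Longrightarrow> \<not> 2^(t+3) dvd (f K + 1) \<Longrightarrow> \<exists>j\<ge>K. f j mod 8 = (3::nat)"
proof (induction t arbitrary: K)
  case 0
  then have k3: "f K mod 8 = 3" using H7[of "f K"] by simp
  show ?case by (rule exI[of _ K]) (use k3 in simp)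
next
  case (Suc t)
  show ?case
  proof (cases "f K mod 8 = 3")
    case True show ?thesis by (rule exI[of _ K]) (use True in simp)
  next
    case False
    define x where "x = f K"
    then obtain a where a: "x + 1 = 8*a" using H8[OF Suc.prems(1) False] unfolding x_def by blast
    have od: "odd x" using a by (rule H9)
    have e1: "f (Suc K) = 3*x+1" using st[of K] od unfolding x_def by (simp add: collatz_def)
    have e2: "f (Suc (Suc K)) = (3*x+1) div 2" using st[of "Suc K"] e1 od by (simp add: collatz_def)
    have y: "f (Suc (Suc K)) + 1 = 12*a" using e2 a by linarith
    have d4: "4 dvd (f (Suc (Suc K)) + 1)" by (rule H10[OF y])
    have nd: "\<not> 2^(t+3) dvd (f (Suc (Suc K)) + 1)"
    proof
      have c23: "coprime (2::nat) 3" by (simp add: coprime_iff_gcd_eq_1 gcd_non_0_nat)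
      have cop: "coprime (2^(t+3)::nat) 3" using c23 by simp
      assume "2^(t+3) dvd (f (Suc (Suc K)) + 1)"
      then have "2^(t+3) dvd 3*(4*a)" using y by (simp add: mult.assoc)
      then have "2^(t+3) dvd 4*a"
        using coprime_dvd_mult_right_iff[of "2^(t+3)" 3 "4*a"] cop by simp
      then have h: "2*2^(t+3) dvd 2*(4*a)" by (rule mult_dvd_mono[OF dvd_refl])
      have h1: "2^(Suc t+3) = (2::nat)*2^(t+3)" by (metis add_Suc power_Suc)
      have h2: "f K + 1 = 2*(4*a)" using a unfolding x_def by simp
      have "2^(Suc t+3) dvd (f K + 1)" unfolding h1 h2 by (rule h)
      then show False using Suc.prems(2) by simp
    qed
    from Suc.IH[OF d4 nd] obtain j where j: "j \<ge> Suc (Suc K)" "f j mod 8 = 3" by blast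
    show ?thesis by (rule exI[of _ j]) (use j in simp)
  qed
qed

theorem mainTheorem17:
  fixes n :: nat and r :: nat
  assumes "n > 0"
    and "\<forall>k. (collatz ^^ k) n \<noteq> 1"
    and "r \<in> {2, 3, 4, 6}"
  shows "\<exists>k. (collatz ^^ k) n mod 8 = r"
proof -
  define f where "f = (\<lambda>k. (collatz ^^ k) n)"
  have st: "\<And>k. f (Suc k) = collatz (f k)" unfolding f_def by simp
  have pos: "\<And>k. f k > 0"
  proof -
    fix k show "f k > 0"
    proof (induction k)
      case 0 show ?case using assms(1) by (simp add: f_def)
    next
      case (Suc k) show ?case unfolding st[of k] collatz_def using Suc.IH by (auto elim!: evenE)
    qed
  qed
  have ne1: "\<And>k. f k \<noteq> 1" using assms(2) unfolding f_def by auto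
  obtain K where K: "K \<ge> 1" "odd (f K)"
  proof (cases "odd (f 1)")
    case True then show ?thesis using that[of 1] by simp
  next
    case False
    obtain j where "j > 1" "odd (f j)" using L1[of f, OF st pos, of 1] False by blast
    then show ?thesis using that[of j] by simp
  qed
  obtain K2 where K2: "K2 \<ge> K" "odd (f K2)" "f K2 mod 4 = 3" using L3[of f, OF st pos ne1 K(2)] by blast
  have "4 dvd (f K2 + 1)" by (rule H11[OF K2(2,3)])
  moreover have "\<not> 2^(f K2+3) dvd (f K2 + 1)"
  proof
    assume "2^(f K2+3) dvd (f K2 + 1)"
    then have "2^(f K2+3) \<le> f K2 + 1" by (rule dvd_imp_le) simp
    moreover have "f K2 < 2^(f K2)" by (rule less_exp)
    moreover have "(2::nat)^(f K2) < 2^(f K2+3)" by (rule power_strict_increasing) simp_all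
    ultimately show False by linarith
  qed
  ultimately obtain j where j: "j \<ge> K2" "f j mod 8 = 3" using L4[of f, OF st] by blast
  have j1: "j \<ge> 1" using j K2 K by simp
  define x where "x = f j"
  have od: "odd x" unfolding x_def by (rule H12[OF j(2)])
  have p: "f (j - 1) = 2 * x"
  proof -
    have sj: "f j = collatz (f (j-1))" using st[of "j-1"] j1 by simp
    show ?thesis
    proof (cases "even (f (j-1))")
      case True then show ?thesis using sj unfolding x_def by (simp add: collatz_def)
    next
      case False then show ?thesis using sj od unfolding x_def by (simp add: collatz_def)
    qed
  qed
  have e1: "f (Suc j) = 3*x+1" using st[of j] od unfolding x_def by (simp add: collatz_def)
  have e2: "f (Suc (Suc j)) = (3*x+1) div 2" using st[of "Suc j"] e1 od by (simp add: collatz_def)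
  have y1: "f (Suc (Suc j)) mod 4 = 1" using e2 j(2) H13 unfolding x_def by simp
  have e3: "f (Suc (Suc (Suc j))) = 3 * f (Suc (Suc j)) + 1"
    using st[of "Suc (Suc j)"] y1 H14b by (simp add: collatz_def)
  have "f (Suc (Suc (Suc j))) mod 4 = 0" using e3 y1 H14 by simp
  from L2[of f, OF st pos this] obtain i where i: "f i mod 8 = 4" by blast
  have r6: "f (j-1) mod 8 = 6" using p j(2) H15 unfolding x_def by simp
  have r2: "f (Suc j) mod 8 = 2" using e1 j(2) H16 unfolding x_def by simp
  have "\<exists>k. f k mod 8 = r"
  proof -
    have "r = 2 \<or> r = 3 \<or> r = 4 \<or> r = 6" using assms(3) by simp
    then show ?thesis
    proof (elim disjE)
      assume "r = 2" then show ?thesis using r2 by blast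
    next
      assume "r = 3" then show ?thesis using j(2) by blast
    next
      assume "r = 4" then show ?thesis using i by blast
    next
      assume "r = 6" then show ?thesis using r6 by blast
    qed
  qed
  then show ?thesis unfolding f_def .
qed

end
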